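(* Let $\mathcal G$ be a DAG, $\boldsymbol\alpha$ a proper set of directed paths in $\mathcal G$, and $(WY)$ an edge of $\mathcal G$. Then $\lhd_{(WY)}(\boldsymbol\alpha)$ is proper.
   Context: A directed path is a sequence of distinct vertices $A_1\to A_2\to\cdots\to A_k$ joined by directed edges; a prefix subpath is a contiguous initial segment $A_1\to\cdots\to A_m$. A set of directed paths is proper if no path in it is a prefix subpath of another path in it. For an edge $(WY)$ (i.e. $W\to Y$), the funnel operator $\lhd_{(WY)}$ maps a set of directed paths $\boldsymbol\alpha$ to the set obtained by replacing each path of the form $(A,\ldots,W,Y)$ by $(A,\ldots,W)$, removing all paths that contain $W$ but do not have $(W,Y)$ as a suffix, and keeping all other paths intact. *)

theory Defs
  imports Main
begin

definition is_dag :: "'a set \<Rightarrow> ('a \<times> 'a) set \<Rightarrow> bool" where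
  "is_dag V E \<longleftrightarrow> finite V \<and> E \<subseteq> V \<times> V \<and> acyclic E"

definition dpath :: "'a set \<Rightarrow> ('a \<times> 'a) set \<Rightarrow> 'a list \<Rightarrow> bool" where
  "dpath V E p \<longleftrightarrow> p \<noteq> [] \<and> distinct p \<and> set p \<subseteq> V \<and>
     (\<forall>i. Suc i < length p \<longrightarrow> (p ! i, p ! Suc i) \<in> E)"

definition prefix_subpath :: "'a list \<Rightarrow> 'a list \<Rightarrow> bool" where
  "prefix_subpath p q \<longleftrightarrow> p \<noteq> [] \<and> (\<exists>r. q = p @ r)"

definition proper :: "'a list set \<Rightarrow> bool" where
  "proper \<alpha> \<longleftrightarrow> (\<forall>p\<in>\<alpha>. \<forall>q\<in>\<alpha>. p \<noteq> q \<longrightarrow> \<not> prefix_subpath p q)"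

definition funnel :: "'a \<Rightarrow> 'a \<Rightarrow> 'a list set \<Rightarrow> 'a list set" where
  "funnel W Y \<alpha> =
     {butlast p | p. p \<in> \<alpha> \<and> (\<exists>r. p = r @ [W, Y])} \<union> {p \<in> \<alpha>. W \<notin> set p}"

end

theory Submission
  imports Defs
begin

lemma pre_W:
  assumes "distinct (r' @ [W])" "r' @ [W] = (r @ [W]) @ s"
  shows "s = []"
proof (rule ccontr)
  assume "s \<noteq> []"
  then obtain s0 where s: "s = s0 @ [W]" using assms(2)
    by (metis append_assoc append_butlast_last_id last_appendR last_snoc)
  then have "r' = r @ [W] @ s0" using assms(2) by simp
  then show False using assms(1) by simp
qed

theorem lemma1:
  fixes V :: "'a set" and E :: "('a \<times> 'a) set" and \<alpha> :: "'a list set" and W Y :: 'a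
  assumes "is_dag V E"
    and "\<forall>p\<in>\<alpha>. dpath V E p"
    and "proper \<alpha>"
    and "(W, Y) \<in> E"
  shows "proper (funnel W Y \<alpha>)"
  unfolding proper_def
proof (intro ballI impI notI)
  fix x y assume x: "x \<in> funnel W Y \<alpha>" and y: "y \<in> funnel W Y \<alpha>" and ne: "x \<noteq> y"
    and pr: "prefix_subpath x y"
  from pr obtain s where xne: "x \<noteq> []" and ys: "y = x @ s" unfolding prefix_subpath_def by auto
  have dist: "\<And>p. p \<in> \<alpha> \<Longrightarrow> distinct p" using assms(2) unfolding dpath_def by auto
  have P: "\<And>p q. p \<in> \<alpha> \<Longrightarrow> q \<in> \<alpha> \<Longrightarrow> p \<noteq> q \<Longrightarrow> \<not> prefix_subpath p q"
    using assms(3) unfolding proper_def by auto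
  show False
  proof (cases "W \<in> set x")
    case True
    then obtain p r where p: "p \<in> \<alpha>" "p = r @ [W, Y]" "x = r @ [W]"
      using x unfolding funnel_def by (auto simp: butlast_append)
    have "W \<in> set y" using ys True by auto
    then obtain p' r' where p': "p' \<in> \<alpha>" "p' = r' @ [W, Y]" "y = r' @ [W]"
      using y unfolding funnel_def by (auto simp: butlast_append)
    have "distinct (r' @ [W])" using dist[OF p'(1)] p'(2) by simp
    moreover have "r' @ [W] = (r @ [W]) @ s" using ys p p' by simp
    ultimately have "s = []" by (rule pre_W)
    then show False using ys ne by simp
  next
    case False
    then have xa: "x \<in> \<alpha>" using x unfolding funnel_def by (auto simp: butlast_append)
    show False
    proof (cases "W \<in> set y")
      case False
      then have "y \<in> \<alpha>" using y unfolding funnel_def by (auto simp: butlast_append)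
      then show False using P xa ne pr by blast
    next
      case True
      then obtain p' r' where p': "p' \<in> \<alpha>" "p' = r' @ [W, Y]" "y = r' @ [W]"
        using y unfolding funnel_def by (auto simp: butlast_append)
      have "s \<noteq> []" using ys p'(3) \<open>W \<notin> set x\<close> by auto
      then obtain s0 where "s = s0 @ [W]" using ys p'(3)
        by (metis append_assoc append_butlast_last_id last_appendR last_snoc)
      then have "p' = x @ (s0 @ [W, Y])" using ys p' by simp
      then have "prefix_subpath x p'" using xne unfolding prefix_subpath_def by blast
      moreover have "x \<noteq> p'" using \<open>W \<notin> set x\<close> p'(2) by auto
      ultimately show False using P xa p'(1) by blast
    qed
  qed
qed

end
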